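(* Let $p$ be a CFM process. Then $p$ does not satisfy DNI if and only if there exists a sequential process $p_i \in \mathrm{dec}(p)$ such that $p_i$ does not satisfy DNI.
   Context: Fix a finite set of actions $Act = H \cup L \cup \{\tau\}$, where $H$ (high-level actions) and $L$ (low-level actions) are disjoint and $\tau$ is the silent action; $\mu$ ranges over $Act$, $h$ over $H$. Fix a finite set of process constants $A,B,C,\dots$ disjoint from $Act$. CFM terms are given by three syntactic categories: guarded processes $s ::= \mathbf{0} \mid \mu.q \mid s+s$; sequential processes $q ::= s \mid C$; parallel processes $p ::= q \mid p \,|\, p$. A CFM process is a term all of whose constants have a defining equation $C \doteq s$ with $s$ guarded. The LTS semantics is given by the rules: $\mu.p \xrightarrow{\mu} p$; if $p \xrightarrow{\mu} p'$ and $C \doteq p$ then $C \xrightarrow{\mu} p'$; if $p \xrightarrow{\mu} p'$ then $p+q \xrightarrow{\mu} p'$ and $q+p \xrightarrow{\mu} p'$; if $p \xrightarrow{\mu} p'$ then $p\,|\,q \xrightarrow{\mu} p'\,|\,q$ and $q\,|\,p \xrightarrow{\mu} q\,|\,p'$. A process $p'$ is reachable from $p$ if $p \to^* p'$ in this LTS. A finite-state machine (FSM) is $N=(S,A,T)$ with $S$ a finite set of places, $A$ a finite set of labels containing $\tau$, and $T \subseteq S \times A \times (S \cup \{\theta\})$, where $\theta$ is the empty multiset. Markings are finite multisets over $S$ ($\oplus$ is multiset union, $\ominus$ multiset difference). A transition $t=(s,\ell,m)$ has pre-set $s$, label $\ell$, post-set $m$; it is enabled at marking $m_1$ if $s \in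 m_1$, and firing gives $m_1 \xrightarrow{\ell} (m_1 \ominus s)\oplus m$. Net semantics of CFM: places are the sequential CFM processes other than $\mathbf{0}$. The decomposition function is $\mathrm{dec}(\mathbf{0})=\theta$, $\mathrm{dec}(\mu.p)=\{\mu.p\}$, $\mathrm{dec}(p+p')=\{p+p'\}$, $\mathrm{dec}(C)=\{C\}$, $\mathrm{dec}(p\,|\,p')=\mathrm{dec}(p)\oplus\mathrm{dec}(p')$. The net $[\![p]\!]$ of a CFM process $p$ is an FSM with initial marking $\mathrm{dec}(p)$, all of whose places and transitions are reachable from $\mathrm{dec}(p)$; its transitions are the triples $(s,\mu,\mathrm{dec}(s'))$ for reachable places $s$ with $s \xrightarrow{\mu} s'$ in the LTS (here $s'$ is sequential, so $\mathrm{dec}(s')$ is $\theta$ or a single place). The net $[\![p\setminus H]\!]$ is obtained from $[\![p]\!]=(S,A,T,\mathrm{dec}(p))$ by renaming each place $s$ as $s\setminus H$, deleting all transitions with label in $H$ (keeping the others with places renamed), taking labels $A\setminus H$, and initial marking $\mathrm{dec}(p)\setminus H$ (renaming applied elementwise); for a marking $m$ of $[\![p]\!]$, $m\setminus H$ is the elementwise renamed marking. Branching bisimilarity on places: in an FSM, $s \Rightarrow^{\epsilon} m$ is the least relation with $s \Rightarrow^\epsilon s$, and if $s \Rightarrow^\epsilon s'$ and $s' \xrightarrow{\tau} m$ then $s \Rightarrow^\epsilon m$ ($m$ a place or $\theta$). A relation $R \subseteq S\times S$ is a branching bisimulation if whenever $(s_1,s_2)\in R$, for every $\ell$ and every $s_1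 \xrightarrow{\ell} m_1$: either $\ell=\tau$ and there is $m_2$ with $s_2 \Rightarrow^\epsilon m_2$, $(s_1,m_2)\in R$ and $(m_1,m_2)\in R$; or there are $s, m_2$ with $s_2 \Rightarrow^\epsilon s \xrightarrow{\ell} m_2$, $(s_1,s)\in R$ and either $m_1=\theta=m_2$ or $(m_1,m_2)\in R$; and symmetrically for moves of $s_2$. Branching bisimilarity $\approx$ is the union of all branching bisimulations. The additive closure $R^\oplus$ of a place relation $R$ is the least relation on markings with $(\theta,\theta)\in R^\oplus$ and, if $(s_1,s_2)\in R$ and $(m_1,m_2)\in R^\oplus$, then $(s_1\oplus m_1, s_2\oplus m_2)\in R^\oplus$. Branching team equivalence is $\approx^\oplus$. For CFM processes, $p \approx^\oplus q$ means $\mathrm{dec}(p)\approx^\oplus \mathrm{dec}(q)$ in the union of the nets of $p$ and $q$; in particular $p'\setminus H \approx^\oplus p''\setminus H$ means that the markings $\mathrm{dec}(p')\setminus H$ and $\mathrm{dec}(p'')\setminus H$ are related by $\approx^\oplus$ (computed in the union of the nets $[\![p'\setminus H]\!]$ and $[\![p''\setminus H]\!]$). DNI (Distributed Non-Interference): a CFM process $p$ satisfies DNI if for all $p',p''$ reachable from $p$ and every $h\in H$ with $p' \xrightarrow{h} p''$, we have $p'\setminus H \approx^\oplus p''\setminus H$. Equivalently, for all markings $m_1,m_2$ reachable from $\mathrm{dec}(p)$ in $[\![p]\!]$ and every $h\in H$ with $m_1 \xrightarrow{h} m_2$, the markings $m_1\setminus H$ and $m_2\setminus H$ of $[\![p\setminus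 H]\!]$ are related by $\approx^\oplus$. *)

theory Defs
  imports Main "HOL-Library.Multiset"
begin

datatype ('a, 'c) proc =
    PNil
  | PPre 'a "('a, 'c) proc"
  | PSum "('a, 'c) proc" "('a, 'c) proc"
  | PCon 'c
  | PPar "('a, 'c) proc" "('a, 'c) proc"

fun guarded :: "('a, 'c) proc \<Rightarrow> bool" where
  "guarded PNil = True"
| "guarded (PPre a q) = (guarded q \<or> (\<exists>C. q = PCon C))"
| "guarded (PSum s t) = (guarded s \<and> guarded t)"
| "guarded (PCon C) = False"
| "guarded (PPar p q) = False"

definition sequential :: "('a, 'c) proc \<Rightarrow> bool" where
  "sequential q \<longleftrightarrow> guarded q \<or> (\<exists>C. q = PCon C)"

fun parallel :: "('a, 'c) proc \<Rightarrow> bool" where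
  "parallel (PPar p q) = (parallel p \<and> parallel q)"
| "parallel p = sequential p"

text \<open>Defining equations: \<open>\<Delta> C\<close> is the body of constant \<open>C\<close>.\<close>
definition cfm_defs :: "('c \<Rightarrow> ('a, 'c) proc) \<Rightarrow> bool" where
  "cfm_defs \<Delta> \<longleftrightarrow> (\<forall>C. guarded (\<Delta> C))"

definition cfm_process :: "('c \<Rightarrow> ('a, 'c) proc) \<Rightarrow> ('a, 'c) proc \<Rightarrow> bool" where
  "cfm_process \<Delta> p \<longleftrightarrow> parallel p \<and> cfm_defs \<Delta>"

inductive step :: "('c \<Rightarrow> ('a, 'c) proc) \<Rightarrow> ('a, 'c) proc \<Rightarrow> 'a \<Rightarrow> ('a, 'c) proc \<Rightarrow> bool"
  for \<Delta> where
  pre: "step \<Delta> (PPre \<mu> p) \<mu> p"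
| con: "step \<Delta> (\<Delta> C) \<mu> p' \<Longrightarrow> step \<Delta> (PCon C) \<mu> p'"
| suml: "step \<Delta> p \<mu> p' \<Longrightarrow> step \<Delta> (PSum p q) \<mu> p'"
| sumr: "step \<Delta> p \<mu> p' \<Longrightarrow> step \<Delta> (PSum q p) \<mu> p'"
| parl: "step \<Delta> p \<mu> p' \<Longrightarrow> step \<Delta> (PPar p q) \<mu> (PPar p' q)"
| parr: "step \<Delta> p \<mu> p' \<Longrightarrow> step \<Delta> (PPar q p) \<mu> (PPar q p')"

definition reachable :: "('c \<Rightarrow> ('a, 'c) proc) \<Rightarrow> ('a, 'c) proc \<Rightarrow> ('a, 'c) proc \<Rightarrow> bool" where
  "reachable \<Delta> = (\<lambda>p p'. \<exists>\<mu>. step \<Delta> p \<mu> p')\<^sup>*\<^sup>*"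

record ('s, 'l) fsm =
  places :: "'s set"
  labels :: "'l set"
  trans :: "('s \<times> 'l \<times> 's multiset) set"

definition fire :: "('s, 'l) fsm \<Rightarrow> 's multiset \<Rightarrow> 'l \<Rightarrow> 's multiset \<Rightarrow> bool" where
  "fire N m1 l m2 \<longleftrightarrow> (\<exists>s m. (s, l, m) \<in> trans N \<and> s \<in># m1 \<and> m2 = (m1 - {#s#}) + m)"

text \<open>\<open>s \<Rightarrow>\<^sup>\<epsilon> m\<close> (the target is a place, i.e. a singleton marking, or \<theta>).\<close>
inductive eps :: "'l \<Rightarrow> ('s, 'l) fsm \<Rightarrow> 's \<Rightarrow> 's multiset \<Rightarrow> bool"
  for tau N where
  refl: "eps tau N s {#s#}"
| tstep: "eps tau N s {#s'#} \<Longrightarrow> (s', tau, m) \<in> trans N \<Longrightarrow> eps tau N s m"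

definition prel :: "('s \<times> 's) set \<Rightarrow> 's multiset \<Rightarrow> 's multiset \<Rightarrow> bool" where
  "prel R m1 m2 \<longleftrightarrow> (\<exists>a b. m1 = {#a#} \<and> m2 = {#b#} \<and> (a, b) \<in> R)"

definition bb_half :: "'l \<Rightarrow> ('s, 'l) fsm \<Rightarrow> ('s \<times> 's) set \<Rightarrow> bool" where
  "bb_half tau N R \<longleftrightarrow>
    (\<forall>s1 s2. (s1, s2) \<in> R \<longrightarrow>
      (\<forall>l m1. (s1, l, m1) \<in> trans N \<longrightarrow>
         (l = tau \<and> (\<exists>s'. eps tau N s2 {#s'#} \<and> (s1, s') \<in> R \<and> prel R m1 {#s'#}))
       \<or> (\<exists>s m2. eps tau N s2 {#s#} \<and> (s, l, m2) \<in> trans N \<and> (s1, s) \<in> R \<and>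
                 ((m1 = {#} \<and> m2 = {#}) \<or> prel R m1 m2))))"

definition branching_bisim :: "'l \<Rightarrow> ('s, 'l) fsm \<Rightarrow> ('s \<times> 's) set \<Rightarrow> bool" where
  "branching_bisim tau N R \<longleftrightarrow>
     R \<subseteq> places N \<times> places N \<and> bb_half tau N R \<and> bb_half tau N (R\<inverse>)"

definition bbisimilar :: "'l \<Rightarrow> ('s, 'l) fsm \<Rightarrow> ('s \<times> 's) set" where
  "bbisimilar tau N = \<Union>{R. branching_bisim tau N R}"

inductive_set add_closure :: "('s \<times> 's) set \<Rightarrow> ('s multiset \<times> 's multiset) set"
  for R where
  empty: "({#}, {#}) \<in> add_closure R"
| add: "(s1, s2) \<in> R \<Longrightarrow> (m1, m2) \<in> add_closure R \<Longrightarrow>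
          (add_mset s1 m1, add_mset s2 m2) \<in> add_closure R"

definition fsm_union :: "('s, 'l) fsm \<Rightarrow> ('s, 'l) fsm \<Rightarrow> ('s, 'l) fsm" where
  "fsm_union N1 N2 = \<lparr>places = places N1 \<union> places N2, labels = labels N1 \<union> labels N2,
                        trans = trans N1 \<union> trans N2\<rparr>"

fun dec :: "('a, 'c) proc \<Rightarrow> ('a, 'c) proc multiset" where
  "dec PNil = {#}"
| "dec (PPre \<mu> p) = {#PPre \<mu> p#}"
| "dec (PSum p q) = {#PSum p q#}"
| "dec (PCon C) = {#PCon C#}"
| "dec (PPar p q) = dec p + dec q"

text \<open>Places of \<open>[[p]]\<close>: sequential processes (other than 0) reachable from \<open>dec p\<close>.\<close>
inductive_set net_places :: "('c \<Rightarrow> ('a, 'c) proc) \<Rightarrow> ('a, 'c) proc \<Rightarrow> ('a, 'c) proc set"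
  for \<Delta> p where
  init: "s \<in># dec p \<Longrightarrow> s \<in> net_places \<Delta> p"
| succ: "s \<in> net_places \<Delta> p \<Longrightarrow> step \<Delta> s \<mu> s' \<Longrightarrow> s'' \<in># dec s' \<Longrightarrow>
           s'' \<in> net_places \<Delta> p"

definition cfm_net :: "('c \<Rightarrow> ('a, 'c) proc) \<Rightarrow> ('a, 'c) proc \<Rightarrow> (('a, 'c) proc, 'a) fsm" where
  "cfm_net \<Delta> p = \<lparr>places = net_places \<Delta> p, labels = UNIV,
     trans = {(s, \<mu>, dec s') | s \<mu> s'. s \<in> net_places \<Delta> p \<and> step \<Delta> s \<mu> s'}\<rparr>"

text \<open>The renaming \<open>s \<mapsto> s\H\<close> is injective, so we identify
  the place \<open>s\H\<close> with \<open>s\<close> (renaming by the identity); H-labelled transitions are deleted.\<close>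
definition net_restrict :: "'a set \<Rightarrow> (('a, 'c) proc, 'a) fsm \<Rightarrow> (('a, 'c) proc, 'a) fsm" where
  "net_restrict H N = \<lparr>places = places N, labels = labels N - H,
     trans = {(s, l, m). (s, l, m) \<in> trans N \<and> l \<notin> H}\<rparr>"

definition DNI :: "'a \<Rightarrow> 'a set \<Rightarrow> ('c \<Rightarrow> ('a, 'c) proc) \<Rightarrow> ('a, 'c) proc \<Rightarrow> bool" where
  "DNI tau H \<Delta> p \<longleftrightarrow>
    (\<forall>p' p'' h. reachable \<Delta> p p' \<and> reachable \<Delta> p p'' \<and> h \<in> H \<and> step \<Delta> p' h p'' \<longrightarrow>
       (dec p', dec p'') \<in> add_closure (bbisimilar tau
          (fsm_union (net_restrict H (cfm_net \<Delta> p')) (net_restrict H (cfm_net \<Delta> p'')))))"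

end

theory Submission
  imports Defs
begin


lemma eps_trans: "eps tau N b m \<Longrightarrow> eps tau N a {#b#} \<Longrightarrow> eps tau N a m"
  by (induction rule: eps.induct) (auto intro: eps.tstep)

lemma eps_mono: "eps tau N1 s m \<Longrightarrow> fsm.trans N1 \<subseteq> fsm.trans N2 \<Longrightarrow> eps tau N2 s m"
  by (induction rule: eps.induct) (auto intro: eps.intros)

lemma prel_empty[simp]: "\<not> prel R {#} m" "\<not> prel R m {#}"
  by (auto simp: prel_def)

lemma prel_comp: "prel R1 a b \<Longrightarrow> prel R2 b c \<Longrightarrow> prel (R1 O R2) a c"
  by (auto simp: prel_def)

lemma prel_single: "prel R m {#b#} \<longleftrightarrow> (\<exists>a. m = {#a#} \<and> (a,b) \<in> R)"
  by (auto simp: prel_def)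

lemma eps_transfer:
  "eps tau N t m \<Longrightarrow> bb_half tau N R \<Longrightarrow> m = {#t'#} \<Longrightarrow> (t,u)\<in>R \<Longrightarrow> \<exists>u'. eps tau N u {#u'#} \<and> (t',u')\<in>R"
proof (induction t m arbitrary: t' rule: eps.induct)
  case (refl s)
  then have "s = t'" by simp
  moreover have "eps tau N u {#u#}" by (rule eps.refl)
  ultimately show ?case using refl.prems(3) by blast
next
  case (tstep t s' m)
  have "\<exists>u'. eps tau N u {#u'#} \<and> (s',u')\<in>R"
    using tstep.IH[OF tstep.prems(1) HOL.refl tstep.prems(3)] .
  then obtain u' where e: "eps tau N u {#u'#}" and r: "(s',u') \<in> R" by blast
  from tstep.prems(1)[unfolded bb_half_def, rule_format, OF r tstep.hyps(2)]
  show ?case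
  proof (rule disjE)
    assume "tau = tau \<and> (\<exists>s''. eps tau N u' {#s''#} \<and> (s', s'') \<in> R \<and> prel R m {#s''#})"
    then obtain u'' where a: "eps tau N u' {#u''#}" "(s', u'') \<in> R" "prel R m {#u''#}" by blast
    have "(t', u'') \<in> R" using a(3) tstep.prems(2) by (simp add: prel_def)
    moreover have "eps tau N u {#u''#}" using eps_trans[OF a(1) e] .
    ultimately show ?thesis by blast
  next
    assume "\<exists>s m2. eps tau N u' {#s#} \<and> (s, tau, m2) \<in> fsm.trans N \<and> (s', s) \<in> R \<and>
                 ((m = {#} \<and> m2 = {#}) \<or> prel R m m2)"
    then obtain v m2 where a: "eps tau N u' {#v#}" "(v, tau, m2) \<in> fsm.trans N" "(s', v) \<in> R"
      "m = {#} \<and> m2 = {#} \<or> prel R m m2" by blast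
    have p: "prel R {#t'#} m2" using a(4) tstep.prems(2) by simp
    then obtain u'' where m2: "m2 = {#u''#}" and "(t', u'') \<in> R" by (auto simp: prel_def)
    moreover have "eps tau N u m2" using eps.tstep[OF eps_trans[OF a(1) e] a(2)] .
    ultimately show ?thesis by blast
  qed
qed

lemma bb_half_comp:
  assumes h1: "bb_half tau N R1" and h2: "bb_half tau N R2"
  shows "bb_half tau N (R1 O R2)"
  unfolding bb_half_def
proof (intro allI impI)
  fix s1 s3 l m1 assume c: "(s1,s3) \<in> R1 O R2" and tr: "(s1,l,m1) \<in> fsm.trans N"
  then obtain s2 where r1: "(s1,s2)\<in>R1" and r2: "(s2,s3)\<in>R2" by blast
  from h1[unfolded bb_half_def, rule_format, OF r1 tr]
  show "(l = tau \<and> (\<exists>s'. eps tau N s3 {#s'#} \<and> (s1, s') \<in> R1 O R2 \<and> prel (R1 O R2) m1 {#s'#})) \<or>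
       (\<exists>s m2. eps tau N s3 {#s#} \<and> (s, l, m2) \<in> fsm.trans N \<and> (s1, s) \<in> R1 O R2 \<and>
           (m1 = {#} \<and> m2 = {#} \<or> prel (R1 O R2) m1 m2))"
  proof (rule disjE)
    assume "l = tau \<and> (\<exists>s'. eps tau N s2 {#s'#} \<and> (s1, s') \<in> R1 \<and> prel R1 m1 {#s'#})"
    then obtain t' where l: "l = tau" and e: "eps tau N s2 {#t'#}" and r: "(s1, t') \<in> R1" and p: "prel R1 m1 {#t'#}"
      by blast
    obtain u' where eu: "eps tau N s3 {#u'#}" and ru: "(t',u')\<in>R2" using eps_transfer[OF e h2 HOL.refl r2] by blast
    have "prel R2 {#t'#} {#u'#}" using ru by (simp add: prel_def)
    then have pc: "prel (R1 O R2) m1 {#u'#}" using prel_comp[OF p] by blast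
    have rc: "(s1,u') \<in> R1 O R2" using r ru by (rule relcompI)
    show ?thesis
        apply (rule disjI1)
        apply (rule conjI[OF l])
        apply (rule exI[of _ u'])
        using eu pc rc by blast
  next
    assume "\<exists>s m2. eps tau N s2 {#s#} \<and> (s, l, m2) \<in> fsm.trans N \<and> (s1, s) \<in> R1 \<and>
                 ((m1 = {#} \<and> m2 = {#}) \<or> prel R1 m1 m2)"
    then obtain t m2 where e: "eps tau N s2 {#t#}" and tr2: "(t, l, m2) \<in> fsm.trans N" and r: "(s1, t) \<in> R1"
      and mm: "m1 = {#} \<and> m2 = {#} \<or> prel R1 m1 m2" by blast
    obtain u where eu: "eps tau N s3 {#u#}" and ru: "(t,u)\<in>R2" using eps_transfer[OF e h2 HOL.refl r2] by blast
    from h2[unfolded bb_half_def, rule_format, OF ru tr2]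
    show ?thesis
    proof (rule disjE)
      assume "l = tau \<and> (\<exists>s'. eps tau N u {#s'#} \<and> (t, s') \<in> R2 \<and> prel R2 m2 {#s'#})"
      then obtain u' where l: "l = tau" and e2: "eps tau N u {#u'#}" and r2': "(t, u') \<in> R2" and p2: "prel R2 m2 {#u'#}"
        by blast
      have "m2 \<noteq> {#}" using p2 by (auto simp: prel_def)
      then have p1: "prel R1 m1 m2" using mm by blast
      have pc: "prel (R1 O R2) m1 {#u'#}" using p1 p2 by (rule prel_comp)
      have rc: "(s1,u') \<in> R1 O R2" using r r2' by (rule relcompI)
      have ee: "eps tau N s3 {#u'#}" using eps_trans[OF e2 eu] .
      show ?thesis
        apply (rule disjI1)
        apply (rule conjI[OF l])
        apply (rule exI[of _ u'])
        using ee pc rc by blast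
    next
      assume "\<exists>s m3. eps tau N u {#s#} \<and> (s, l, m3) \<in> fsm.trans N \<and> (t, s) \<in> R2 \<and>
                 ((m2 = {#} \<and> m3 = {#}) \<or> prel R2 m2 m3)"
      then obtain v m3 where e2: "eps tau N u {#v#}" and tr3: "(v, l, m3) \<in> fsm.trans N" and r2': "(t, v) \<in> R2"
        and mm2: "m2 = {#} \<and> m3 = {#} \<or> prel R2 m2 m3" by blast
      have rc: "(s1,v) \<in> R1 O R2" using r r2' by (rule relcompI)
      have ee: "eps tau N s3 {#v#}" using eps_trans[OF e2 eu] .
      have mc: "m1 = {#} \<and> m3 = {#} \<or> prel (R1 O R2) m1 m3"
      proof (cases "m2 = {#}")
        case True
        then have "m1 = {#}" using mm by (auto simp: prel_def)
        moreover have "m3 = {#}" using mm2 True by (auto simp: prel_def)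
        ultimately show ?thesis by blast
      next
        case False
        then have "prel R1 m1 m2" "prel R2 m2 m3" using mm mm2 by blast+
        then show ?thesis using prel_comp by metis
      qed
      show ?thesis
        apply (rule disjI2)
        apply (rule exI[of _ v], rule exI[of _ m3])
        apply (intro conjI)
           apply (rule ee)
          apply (rule tr3)
         apply (rule rc)
        apply (rule mc)
        done
    qed
  qed
qed

lemma bisim_comp: "branching_bisim tau N R1 \<Longrightarrow> branching_bisim tau N R2 \<Longrightarrow> branching_bisim tau N (R1 O R2)"
  unfolding branching_bisim_def converse_relcomp
proof (elim conjE, intro conjI)
  assume "R1 \<subseteq> places N \<times> places N" "R2 \<subseteq> places N \<times> places N"
  then show "R1 O R2 \<subseteq> places N \<times> places N" by auto
next
  assume "bb_half tau N R1" "bb_half tau N R2"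
  then show "bb_half tau N (R1 O R2)" by (rule bb_half_comp)
next
  assume "bb_half tau N (R1\<inverse>)" "bb_half tau N (R2\<inverse>)"
  then show "bb_half tau N (R2\<inverse> O R1\<inverse>)" by (rule bb_half_comp[rotated])
qed

lemma bisim_conv: "branching_bisim tau N R \<Longrightarrow> branching_bisim tau N (R\<inverse>)"
  unfolding branching_bisim_def converse_converse by auto

lemma bbisI: "branching_bisim tau N R \<Longrightarrow> (a,b) \<in> R \<Longrightarrow> (a,b) \<in> bbisimilar tau N"
  unfolding bbisimilar_def by blast

lemma bbisE: "(a,b) \<in> bbisimilar tau N \<Longrightarrow> (\<And>R. branching_bisim tau N R \<Longrightarrow> (a,b) \<in> R \<Longrightarrow> P) \<Longrightarrow> P"
  unfolding bbisimilar_def by blast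

lemma bbis_sym: "(a,b) \<in> bbisimilar tau N \<Longrightarrow> (b,a) \<in> bbisimilar tau N"
  by (erule bbisE) (rule bbisI[OF bisim_conv], assumption, simp)

lemma bbis_trans: "(a,b) \<in> bbisimilar tau N \<Longrightarrow> (b,c) \<in> bbisimilar tau N \<Longrightarrow> (a,c) \<in> bbisimilar tau N"
proof -
  assume "(a,b) \<in> bbisimilar tau N" "(b,c) \<in> bbisimilar tau N"
  then obtain R1 R2 where "branching_bisim tau N R1" "(a,b) \<in> R1" "branching_bisim tau N R2" "(b,c) \<in> R2"
    by (meson bbisE)
  then show ?thesis using bbisI[OF bisim_comp] relcompI by metis
qed



section \<open>Additive closure\<close>

lemma cl_plus: "(X1,Y1) \<in> add_closure R \<Longrightarrow> (X2,Y2) \<in> add_closure R \<Longrightarrow> (X1+X2, Y1+Y2) \<in> add_closure R"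
  by (induction rule: add_closure.induct) (auto intro: add_closure.add)

lemma cl_mono: "(X,Y) \<in> add_closure R \<Longrightarrow> R \<subseteq> S \<Longrightarrow> (X,Y) \<in> add_closure S"
  by (induction rule: add_closure.induct) (auto intro: add_closure.intros)

lemma cl_refl: "(\<forall>x\<in>#X. (x,x) \<in> R) \<Longrightarrow> (X,X) \<in> add_closure R"
  by (induction X) (auto intro: add_closure.intros)

lemma cl_restrict: "(X,Y) \<in> add_closure R \<Longrightarrow> set_mset X \<subseteq> P \<Longrightarrow> set_mset Y \<subseteq> P \<Longrightarrow> (X,Y) \<in> add_closure (R \<inter> P \<times> P)"
  by (induction rule: add_closure.induct) (auto intro: add_closure.intros)

lemma cl_image: "(X,Y) \<in> add_closure R \<Longrightarrow> (\<And>a b. (a,b)\<in>R \<Longrightarrow> f a = f b) \<Longrightarrow> image_mset f X = image_mset f Y"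
  by (induction rule: add_closure.induct) auto

lemma cl_dom: "(X,Y) \<in> add_closure R \<Longrightarrow> x \<in># X \<Longrightarrow> \<exists>y. (x,y) \<in> R"
  by (induction rule: add_closure.induct) auto

lemma image_cl:
  assumes sym: "\<And>a b. (a,b)\<in>R \<Longrightarrow> (b,a)\<in>R"
  shows "image_mset (\<lambda>x. R``{x}) X = image_mset (\<lambda>x. R``{x}) Y \<Longrightarrow> (\<forall>x\<in>#X. (x,x)\<in>R) \<Longrightarrow> (X,Y) \<in> add_closure R"
proof (induction X arbitrary: Y)
  case empty
  then show ?case by (auto intro: add_closure.intros)
next
  case (add x X)
  let ?f = "\<lambda>x. R``{x}"
  have "?f x \<in># image_mset ?f Y" using add.prems(1) by (metis image_mset_add_mset union_single_eq_member)
  then obtain y where y: "y \<in># Y" and fy: "?f y = ?f x" by auto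
  have "(x,x) \<in> R" using add.prems(2) by simp
  then have "x \<in> ?f y" using fy by simp
  then have xy: "(x,y) \<in> R" using sym by blast
  obtain Y0 where Y0: "Y = add_mset y Y0" using y by (metis multi_member_split)
  have "image_mset ?f X = image_mset ?f Y0" using add.prems(1) Y0 fy by simp
  then have "(X,Y0) \<in> add_closure R" using add.IH add.prems(2) by simp
  then show ?case using Y0 xy by (auto intro: add_closure.add)
qed

lemma cancel:
  assumes sym: "\<And>a b. (a,b)\<in>R \<Longrightarrow> (b,a)\<in>R" and tr: "\<And>a b c. (a,b)\<in>R \<Longrightarrow> (b,c)\<in>R \<Longrightarrow> (a,c)\<in>R"
    and c: "(M + X, M + Y) \<in> add_closure R"
  shows "(X,Y) \<in> add_closure R"
proof -
  let ?f = "\<lambda>x. R``{x}"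
  have eq: "\<And>a b. (a,b)\<in>R \<Longrightarrow> ?f a = ?f b"
  proof -
    fix a b assume ab: "(a,b)\<in>R"
    show "?f a = ?f b"
    proof
      show "?f a \<subseteq> ?f b" using ab sym tr by blast
      show "?f b \<subseteq> ?f a" using ab tr by blast
    qed
  qed
  have "image_mset ?f (M+X) = image_mset ?f (M+Y)" using cl_image[OF c eq] .
  then have im: "image_mset ?f X = image_mset ?f Y" by simp
  have "\<forall>x\<in>#X. (x,x)\<in>R"
  proof
    fix x assume "x \<in># X"
    then have "x \<in># M + X" by simp
    then obtain y where "(x,y) \<in> R" using cl_dom[OF c] by blast
    then show "(x,x)\<in>R" using sym tr by blast
  qed
  then show ?thesis using image_cl[OF sym im] by blast
qed

lemma cl_size: "(X,Y) \<in> add_closure R \<Longrightarrow> size X = size Y"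
  by (induction rule: add_closure.induct) auto



definition netH :: "'a set \<Rightarrow> ('c \<Rightarrow> ('a, 'c) proc) \<Rightarrow> ('a, 'c) proc set \<Rightarrow> (('a, 'c) proc, 'a) fsm" where
  "netH H \<Delta> P = \<lparr>places = P, labels = UNIV - H,
     trans = {(s, l, m). s \<in> P \<and> l \<notin> H \<and> (\<exists>s'. step \<Delta> s l s' \<and> m = dec s')}\<rparr>"

lemma union_eq: "fsm_union (net_restrict H (cfm_net \<Delta> a)) (net_restrict H (cfm_net \<Delta> b))
   = netH H \<Delta> (net_places \<Delta> a \<union> net_places \<Delta> b)"
  unfolding fsm_union_def net_restrict_def cfm_net_def netH_def by auto

definition closedP :: "('c \<Rightarrow> ('a, 'c) proc) \<Rightarrow> ('a, 'c) proc set \<Rightarrow> bool" where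
  "closedP \<Delta> P \<longleftrightarrow> (\<forall>s \<mu> s' x. s \<in> P \<longrightarrow> step \<Delta> s \<mu> s' \<longrightarrow> x \<in># dec s' \<longrightarrow> x \<in> P)"

lemma closed_net: "closedP \<Delta> (net_places \<Delta> q)"
  unfolding closedP_def by (auto intro: net_places.succ)

lemma closed_Un: "closedP \<Delta> P \<Longrightarrow> closedP \<Delta> Q \<Longrightarrow> closedP \<Delta> (P \<union> Q)"
  unfolding closedP_def by blast

lemma net_places_sub: "s \<in> net_places \<Delta> a \<Longrightarrow> set_mset (dec a) \<subseteq> net_places \<Delta> b \<Longrightarrow> s \<in> net_places \<Delta> b"
  by (induction rule: net_places.induct) (auto intro: net_places.succ)

lemma trans_netH: "(s,l,m) \<in> fsm.trans (netH H \<Delta> P) \<longleftrightarrow> s \<in> P \<and> l \<notin> H \<and> (\<exists>s'. step \<Delta> s l s' \<and> m = dec s')"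
  unfolding netH_def by simp

lemma places_netH[simp]: "places (netH H \<Delta> P) = P"
  unfolding netH_def by simp

lemma bb_half_mono:
  assumes "P1 \<subseteq> P2" "bb_half tau (netH H \<Delta> P1) R" "Domain R \<subseteq> P1"
  shows "bb_half tau (netH H \<Delta> P2) R"
proof -
  have sub: "fsm.trans (netH H \<Delta> P1) \<subseteq> fsm.trans (netH H \<Delta> P2)"
    using assms(1) by (auto simp: trans_netH)
  have ep: "\<And>s m. eps tau (netH H \<Delta> P1) s m \<Longrightarrow> eps tau (netH H \<Delta> P2) s m"
    using eps_mono[OF _ sub] by blast
  show ?thesis
    unfolding bb_half_def
  proof (intro allI impI)
    fix s1 s2 l m1 assume r: "(s1,s2) \<in> R" and t: "(s1, l, m1) \<in> fsm.trans (netH H \<Delta> P2)"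
    have "s1 \<in> P1" using r assms(3) by blast
    then have t1: "(s1, l, m1) \<in> fsm.trans (netH H \<Delta> P1)" using t by (simp add: trans_netH)
    from assms(2)[unfolded bb_half_def, rule_format, OF r t1]
    show "l = tau \<and> (\<exists>s'. eps tau (netH H \<Delta> P2) s2 {#s'#} \<and> (s1, s') \<in> R \<and> prel R m1 {#s'#}) \<or>
       (\<exists>s m2. eps tau (netH H \<Delta> P2) s2 {#s#} \<and> (s, l, m2) \<in> fsm.trans (netH H \<Delta> P2) \<and>
             (s1, s) \<in> R \<and> (m1 = {#} \<and> m2 = {#} \<or> prel R m1 m2))"
      using ep sub by blast
  qed
qed

lemma bisim_mono:
  assumes "P1 \<subseteq> P2" "branching_bisim tau (netH H \<Delta> P1) R"
  shows "branching_bisim tau (netH H \<Delta> P2) R"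
  using assms bb_half_mono[OF assms(1), of tau H \<Delta> R] bb_half_mono[OF assms(1), of tau H \<Delta> "R\<inverse>"]
  unfolding branching_bisim_def by auto

lemma bbis_mono: "P1 \<subseteq> P2 \<Longrightarrow> bbisimilar tau (netH H \<Delta> P1) \<subseteq> bbisimilar tau (netH H \<Delta> P2)"
  by (auto elim!: bbisE intro: bbisI bisim_mono)

lemma eps_restrict:
  assumes cl: "closedP \<Delta> P1" and sub: "P1 \<subseteq> P2"
  shows "eps tau (netH H \<Delta> P2) s m \<Longrightarrow> s \<in> P1 \<Longrightarrow> eps tau (netH H \<Delta> P1) s m \<and> set_mset m \<subseteq> P1"
proof (induction rule: eps.induct)
  case (refl s)
  then show ?case by (auto intro: eps.refl)
next
  case (tstep s s' m)
  then have e: "eps tau (netH H \<Delta> P1) s {#s'#}" and s': "s' \<in> P1" by auto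
  from tstep.hyps(2) obtain s'' where st: "step \<Delta> s' tau s''" "m = dec s''" "tau \<notin> H"
    by (auto simp: trans_netH)
  have t: "(s', tau, m) \<in> fsm.trans (netH H \<Delta> P1)" using st s' by (auto simp: trans_netH)
  have "set_mset m \<subseteq> P1" using st s' cl unfolding closedP_def by blast
  moreover have "eps tau (netH H \<Delta> P1) s m" using eps.tstep[OF e t] .
  ultimately show ?case by blast
qed

lemma bb_half_restrict:
  assumes cl: "closedP \<Delta> P1" and sub: "P1 \<subseteq> P2" and h: "bb_half tau (netH H \<Delta> P2) R"
  shows "bb_half tau (netH H \<Delta> P1) (R \<inter> P1 \<times> P1)"
  unfolding bb_half_def
proof (intro allI impI)
  fix s1 s2 l m1 assume r: "(s1,s2) \<in> R \<inter> P1 \<times> P1" and t: "(s1, l, m1) \<in> fsm.trans (netH H \<Delta> P1)"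
  have s1: "s1 \<in> P1" and s2: "s2 \<in> P1" and rr: "(s1,s2) \<in> R" using r by auto
  have t2: "(s1, l, m1) \<in> fsm.trans (netH H \<Delta> P2)" using t sub by (auto simp: trans_netH)
  have m1: "set_mset m1 \<subseteq> P1" using t cl unfolding closedP_def by (auto simp: trans_netH)
  have prl: "\<And>a b. prel R a b \<Longrightarrow> set_mset a \<subseteq> P1 \<Longrightarrow> set_mset b \<subseteq> P1 \<Longrightarrow> prel (R \<inter> P1 \<times> P1) a b"
    by (auto simp: prel_def)
  from h[unfolded bb_half_def, rule_format, OF rr t2]
  show "l = tau \<and> (\<exists>s'. eps tau (netH H \<Delta> P1) s2 {#s'#} \<and> (s1, s') \<in> R \<inter> P1 \<times> P1 \<and> prel (R \<inter> P1 \<times> P1) m1 {#s'#}) \<or>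
       (\<exists>s m2. eps tau (netH H \<Delta> P1) s2 {#s#} \<and> (s, l, m2) \<in> fsm.trans (netH H \<Delta> P1) \<and>
             (s1, s) \<in> R \<inter> P1 \<times> P1 \<and> (m1 = {#} \<and> m2 = {#} \<or> prel (R \<inter> P1 \<times> P1) m1 m2))"
  proof (rule disjE)
    assume "l = tau \<and> (\<exists>s'. eps tau (netH H \<Delta> P2) s2 {#s'#} \<and> (s1, s') \<in> R \<and> prel R m1 {#s'#})"
    then obtain s' where l: "l = tau" and e: "eps tau (netH H \<Delta> P2) s2 {#s'#}" and r': "(s1, s') \<in> R"
      and p: "prel R m1 {#s'#}" by blast
    have e1: "eps tau (netH H \<Delta> P1) s2 {#s'#}" and s': "s' \<in> P1"
      using eps_restrict[OF cl sub e s2] by auto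
    have p1: "prel (R \<inter> P1 \<times> P1) m1 {#s'#}" using prl[OF p m1] s' by simp
    show ?thesis
      apply (rule disjI1)
      using l e1 r' s1 s' p1 by blast
  next
    assume "\<exists>s m2. eps tau (netH H \<Delta> P2) s2 {#s#} \<and> (s, l, m2) \<in> fsm.trans (netH H \<Delta> P2) \<and>
             (s1, s) \<in> R \<and> (m1 = {#} \<and> m2 = {#} \<or> prel R m1 m2)"
    then obtain s m2 where e: "eps tau (netH H \<Delta> P2) s2 {#s#}" and t3: "(s, l, m2) \<in> fsm.trans (netH H \<Delta> P2)"
      and r': "(s1, s) \<in> R" and mm: "m1 = {#} \<and> m2 = {#} \<or> prel R m1 m2" by blast
    have e1: "eps tau (netH H \<Delta> P1) s2 {#s#}" and s: "s \<in> P1"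
      using eps_restrict[OF cl sub e s2] by auto
    have t4: "(s, l, m2) \<in> fsm.trans (netH H \<Delta> P1)" using t3 s by (auto simp: trans_netH)
    have m2: "set_mset m2 \<subseteq> P1" using t4 cl unfolding closedP_def by (auto simp: trans_netH)
    have mm': "m1 = {#} \<and> m2 = {#} \<or> prel (R \<inter> P1 \<times> P1) m1 m2" using mm prl[OF _ m1 m2] by blast
    show ?thesis
      apply (rule disjI2)
      apply (rule exI[of _ s], rule exI[of _ m2])
      using e1 t4 r' s1 s mm' by blast
  qed
qed

lemma bisim_restrict:
  assumes "closedP \<Delta> P1" "P1 \<subseteq> P2" "branching_bisim tau (netH H \<Delta> P2) R"
  shows "branching_bisim tau (netH H \<Delta> P1) (R \<inter> P1 \<times> P1)"
proof -
  have "(R \<inter> P1 \<times> P1)\<inverse> = R\<inverse> \<inter> P1 \<times> P1" by auto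
  then show ?thesis using assms bb_half_restrict[OF assms(1,2), where R=R and tau=tau] bb_half_restrict[OF assms(1,2), where R="R\<inverse>" and tau=tau]
    unfolding branching_bisim_def by auto
qed

lemma bbis_restrict:
  assumes "closedP \<Delta> P1" "P1 \<subseteq> P2" "(a,b) \<in> bbisimilar tau (netH H \<Delta> P2)" "a \<in> P1" "b \<in> P1"
  shows "(a,b) \<in> bbisimilar tau (netH H \<Delta> P1)"
  using assms(3) by (rule bbisE) (rule bbisI[OF bisim_restrict[OF assms(1,2)]], assumption, simp add: assms)



lemma seq_step: "step \<Delta> q \<mu> q' \<Longrightarrow> cfm_defs \<Delta> \<Longrightarrow> sequential q \<Longrightarrow> sequential q'"
proof (induction rule: step.induct)
  case (pre \<mu> p)
  then show ?case by (auto simp: sequential_def)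
next
  case (con C \<mu> p')
  then show ?case by (auto simp: sequential_def cfm_defs_def)
next
  case (suml p \<mu> p' q)
  then show ?case by (auto simp: sequential_def)
next
  case (sumr p \<mu> p' q)
  then show ?case by (auto simp: sequential_def)
next
  case (parl p \<mu> p' q)
  then show ?case by (auto simp: sequential_def)
next
  case (parr p \<mu> p' q)
  then show ?case by (auto simp: sequential_def)
qed

lemma seq_dec: "sequential q \<Longrightarrow> x \<in># dec q \<Longrightarrow> x = q"
  by (cases q) (auto simp: sequential_def)

lemma seq_par: "sequential q \<Longrightarrow> parallel q"
  by (cases q) (auto simp: sequential_def)

lemma par_dec: "parallel q \<Longrightarrow> x \<in># dec q \<Longrightarrow> sequential x"
  by (induction q) (auto simp: sequential_def)

lemma par_step: "step \<Delta> q \<mu> q' \<Longrightarrow> cfm_defs \<Delta> \<Longrightarrow> parallel q \<Longrightarrow> parallel q'"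
proof (induction rule: step.induct)
  case (pre \<mu> p)
  then show ?case by (auto simp: sequential_def intro: seq_par)
next
  case (con C \<mu> p')
  then show ?case using seq_par by (auto simp: sequential_def cfm_defs_def)
next
  case (suml p \<mu> p' q)
  then show ?case using seq_par by (auto simp: sequential_def)
next
  case (sumr p \<mu> p' q)
  then show ?case using seq_par by (auto simp: sequential_def)
qed auto

lemma par_reach: "reachable \<Delta> p p' \<Longrightarrow> cfm_defs \<Delta> \<Longrightarrow> parallel p \<Longrightarrow> parallel p'"
  unfolding reachable_def
  by (induction rule: rtranclp_induct) (auto intro: par_step)

lemma places_seq: "s \<in> net_places \<Delta> q \<Longrightarrow> cfm_defs \<Delta> \<Longrightarrow> parallel q \<Longrightarrow> sequential s"
proof (induction rule: net_places.induct)
  case (init s)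
  then show ?case using par_dec by blast
next
  case (succ s \<mu> s' s'')
  have "sequential s" using succ.IH succ.prems by blast
  then have "sequential s'" by (rule seq_step[OF succ.hyps(2) succ.prems(1)])
  then have "s'' = s'" using succ.hyps(3) by (rule seq_dec)
  then show ?case using \<open>sequential s'\<close> by simp
qed

lemma id_bisim:
  assumes cl: "closedP \<Delta> P" and sq: "\<forall>s\<in>P. sequential s" and d: "cfm_defs \<Delta>"
  shows "branching_bisim tau (netH H \<Delta> P) (Id_on P)"
proof -
  have "bb_half tau (netH H \<Delta> P) (Id_on P)"
    unfolding bb_half_def
  proof (intro allI impI)
    fix s1 s2 l m1 assume r: "(s1,s2) \<in> Id_on P" and t: "(s1, l, m1) \<in> fsm.trans (netH H \<Delta> P)"
    then have s: "s1 = s2" "s1 \<in> P" by auto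
    from t obtain s' where st: "step \<Delta> s1 l s'" "m1 = dec s'" by (auto simp: trans_netH)
    have "sequential s'" using seq_step[OF st(1) d] sq s by blast
    then have "m1 = {#} \<or> m1 = {#s'#}" using st(2) by (cases s') (auto simp: sequential_def)
    moreover have "s' \<in># m1 \<Longrightarrow> s' \<in> P" using cl st s unfolding closedP_def by blast
    ultimately have mm: "m1 = {#} \<and> m1 = {#} \<or> prel (Id_on P) m1 m1" by (auto simp: prel_def)
    show "l = tau \<and> (\<exists>s'. eps tau (netH H \<Delta> P) s2 {#s'#} \<and> (s1, s') \<in> Id_on P \<and> prel (Id_on P) m1 {#s'#}) \<or>
       (\<exists>s m2. eps tau (netH H \<Delta> P) s2 {#s#} \<and> (s, l, m2) \<in> fsm.trans (netH H \<Delta> P) \<and>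
             (s1, s) \<in> Id_on P \<and> (m1 = {#} \<and> m2 = {#} \<or> prel (Id_on P) m1 m2))"
      apply (rule disjI2)
      apply (rule exI[of _ s1], rule exI[of _ m1])
      using eps.refl[of tau "netH H \<Delta> P" s1] t s mm by auto
  qed
  then show ?thesis unfolding branching_bisim_def by auto
qed

fun lwf :: "('c \<Rightarrow> ('a, 'c) proc) \<Rightarrow> ('a, 'c) proc \<Rightarrow> ('a, 'c) proc \<Rightarrow> bool" where
  "lwf \<Delta> (PPar a b) p' = (\<exists>a' b'. p' = PPar a' b' \<and> lwf \<Delta> a a' \<and> lwf \<Delta> b b')"
| "lwf \<Delta> p p' = reachable \<Delta> p p'"

lemma reach_refl: "reachable \<Delta> p p"
  unfolding reachable_def by simp

lemma reach_step: "reachable \<Delta> p p' \<Longrightarrow> step \<Delta> p' \<mu> p'' \<Longrightarrow> reachable \<Delta> p p''"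
  unfolding reachable_def by (rule rtranclp.rtrancl_into_rtrancl) auto

lemma lw_refl: "lwf \<Delta> p p"
  by (induction p) (auto simp: reach_refl)

lemma lw_step: "lwf \<Delta> p p' \<Longrightarrow> step \<Delta> p' \<mu> p'' \<Longrightarrow> lwf \<Delta> p p''"
proof (induction p arbitrary: p' p'')
  case (PPar a b)
  then obtain a' b' where p': "p' = PPar a' b'" "lwf \<Delta> a a'" "lwf \<Delta> b b'" by auto
  from PPar.prems(2)[unfolded p'(1)] show ?case
    by (cases rule: step.cases) (use PPar.IH p' in auto)
qed (auto intro: reach_step)

lemma reach_lw: "reachable \<Delta> p p' \<Longrightarrow> lwf \<Delta> p p'"
  unfolding reachable_def
proof (induction rule: rtranclp_induct)
  case base
  then show ?case by (rule lw_refl)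
next
  case (step y z)
  then obtain \<mu> where "step \<Delta> y \<mu> z" by blast
  then show ?case by (rule lw_step[OF step.IH])
qed

lemma reach_nil: "reachable \<Delta> PNil q \<Longrightarrow> q = PNil"
  unfolding reachable_def
  by (induction rule: rtranclp_induct) (auto elim: step.cases)

lemma decomp:
  "lwf \<Delta> p p' \<Longrightarrow> step \<Delta> p' h p'' \<Longrightarrow> \<exists>pi M s' s''. pi \<in># dec p \<and> reachable \<Delta> pi s' \<and> step \<Delta> s' h s''
     \<and> dec p' = M + dec s' \<and> dec p'' = M + dec s''"
proof (induction p arbitrary: p' p'')
  case PNil
  then have "p' = PNil" using reach_nil by simp
  then show ?case using PNil.prems(2) by (auto elim: step.cases)
next
  case (PPar a b)
  then obtain a' b' where p': "p' = PPar a' b'" "lwf \<Delta> a a'" "lwf \<Delta> b b'" by auto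
  from PPar.prems(2)[unfolded p'(1)] show ?case
  proof (cases rule: step.cases)
    case (parl a'')
    obtain pi M s' s'' where "pi \<in># dec a" "reachable \<Delta> pi s'" "step \<Delta> s' h s''"
      "dec a' = M + dec s'" "dec a'' = M + dec s''" using PPar.IH(1)[OF p'(2) parl(2)] by blast
    then show ?thesis using p' parl
      by (intro exI[of _ pi] exI[of _ "M + dec b'"] exI[of _ s'] exI[of _ s'']) (auto simp: ac_simps)
  next
    case (parr b'')
    obtain pi M s' s'' where "pi \<in># dec b" "reachable \<Delta> pi s'" "step \<Delta> s' h s''"
      "dec b' = M + dec s'" "dec b'' = M + dec s''" using PPar.IH(2)[OF p'(3) parr(2)] by blast
    then show ?thesis using p' parr
      by (intro exI[of _ pi] exI[of _ "M + dec a'"] exI[of _ s'] exI[of _ s'']) (auto simp: ac_simps)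
  qed
next
  case (PPre x q)
  then show ?case by (intro exI[of _ "PPre x q"] exI[of _ "{#}"] exI[of _ p'] exI[of _ p'']) simp
next
  case (PSum x q)
  then show ?case by (intro exI[of _ "PSum x q"] exI[of _ "{#}"] exI[of _ p'] exI[of _ p'']) simp
next
  case (PCon x)
  then show ?case by (intro exI[of _ "PCon x"] exI[of _ "{#}"] exI[of _ p'] exI[of _ p'']) simp
qed

lemma reach_parl: "reachable \<Delta> a a' \<Longrightarrow> reachable \<Delta> (PPar a b) (PPar a' b)"
  unfolding reachable_def
  by (induction rule: rtranclp_induct) (auto intro: rtranclp.rtrancl_into_rtrancl step.parl)

lemma reach_parr: "reachable \<Delta> b b' \<Longrightarrow> reachable \<Delta> (PPar a b) (PPar a b')"
  unfolding reachable_def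
  by (induction rule: rtranclp_induct) (auto intro: rtranclp.rtrancl_into_rtrancl step.parr)

lemma compose:
  "pi \<in># dec p \<Longrightarrow> reachable \<Delta> pi s' \<Longrightarrow> step \<Delta> s' h s'' \<Longrightarrow>
    \<exists>p' p'' M. reachable \<Delta> p p' \<and> step \<Delta> p' h p'' \<and> dec p' = M + dec s' \<and> dec p'' = M + dec s''"
proof (induction p)
  case (PPar a b)
  then consider "pi \<in># dec a" | "pi \<in># dec b" by auto
  then show ?case
  proof cases
    case 1
    then obtain a' a'' M where "reachable \<Delta> a a'" "step \<Delta> a' h a''" "dec a' = M + dec s'" "dec a'' = M + dec s''"
      using PPar by blast
    then show ?thesis
      by (intro exI[of _ "PPar a' b"] exI[of _ "PPar a'' b"] exI[of _ "M + dec b"])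
         (auto simp: ac_simps intro: reach_parl step.parl)
  next
    case 2
    then obtain b' b'' M where "reachable \<Delta> b b'" "step \<Delta> b' h b''" "dec b' = M + dec s'" "dec b'' = M + dec s''"
      using PPar by blast
    then show ?thesis
      by (intro exI[of _ "PPar a b'"] exI[of _ "PPar a b''"] exI[of _ "M + dec a"])
         (auto simp: ac_simps intro: reach_parr step.parr)
  qed
next
  case PNil
  then show ?case by simp
next
  case (PPre x q)
  then show ?case by (intro exI[of _ s'] exI[of _ s''] exI[of _ "{#}"]) simp
next
  case (PSum x q)
  then show ?case by (intro exI[of _ s'] exI[of _ s''] exI[of _ "{#}"]) simp
next
  case (PCon x)
  then show ?case by (intro exI[of _ s'] exI[of _ s''] exI[of _ "{#}"]) simp
qed

theorem theorem4p1:
  fixes tau :: 'a and H :: "'a set" and \<Delta> :: "'c \<Rightarrow> ('a, 'c) proc" and p :: "('a, 'c) proc"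
  assumes "finite (UNIV :: 'a set)" and "finite (UNIV :: 'c set)"
    and "tau \<notin> H"
    and "cfm_process \<Delta> p"
  shows "\<not> DNI tau H \<Delta> p \<longleftrightarrow> (\<exists>pi. pi \<in># dec p \<and> \<not> DNI tau H \<Delta> pi)"
proof -
  have defs: "cfm_defs \<Delta>" and par: "parallel p" using assms(4) unfolding cfm_process_def by auto
  define Bb where "Bb a b = bbisimilar tau (netH H \<Delta> (net_places \<Delta> a \<union> net_places \<Delta> b))" for a b
  have DNI_iff: "\<And>q. DNI tau H \<Delta> q \<longleftrightarrow> (\<forall>p' p'' h. reachable \<Delta> q p' \<and> reachable \<Delta> q p'' \<and> h \<in> H \<and> step \<Delta> p' h p''
      \<longrightarrow> (dec p', dec p'') \<in> add_closure (Bb p' p''))"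
    by (simp only: DNI_def Bb_def union_eq)
  have subP: "net_places \<Delta> s' \<union> net_places \<Delta> s'' \<subseteq> net_places \<Delta> p' \<union> net_places \<Delta> p''"
    if d1: "dec p' = M + dec s'" and d2: "dec p'' = M + dec s''" for p' p'' s' s'' M
  proof -
    have "set_mset (dec s') \<subseteq> net_places \<Delta> p'" using d1 net_places.init[of _ p'] by auto
    moreover have "set_mset (dec s'') \<subseteq> net_places \<Delta> p''" using d2 net_places.init[of _ p''] by auto
    ultimately show ?thesis using net_places_sub by blast
  qed
  show ?thesis
  proof
    assume nd: "\<not> DNI tau H \<Delta> p"
    show "\<exists>pi. pi \<in># dec p \<and> \<not> DNI tau H \<Delta> pi"
    proof (rule ccontr)
      assume "\<not> (\<exists>pi. pi \<in># dec p \<and> \<not> DNI tau H \<Delta> pi)"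
      then have all: "\<forall>pi. pi \<in># dec p \<longrightarrow> DNI tau H \<Delta> pi" by blast
      have "DNI tau H \<Delta> p" unfolding DNI_iff
      proof (intro allI impI, elim conjE)
        fix p' p'' h assume r1: "reachable \<Delta> p p'" and r2: "reachable \<Delta> p p''" and hH: "h \<in> H"
          and st: "step \<Delta> p' h p''"
        obtain pi M s' s'' where pi: "pi \<in># dec p" and rs: "reachable \<Delta> pi s'" and st': "step \<Delta> s' h s''"
          and d1: "dec p' = M + dec s'" and d2: "dec p'' = M + dec s''"
          using decomp[OF reach_lw[OF r1] st] by blast
        have "DNI tau H \<Delta> pi" using all pi by blast
        then have c: "(dec s', dec s'') \<in> add_closure (Bb s' s'')"
          unfolding DNI_iff using rs reach_step[OF rs st'] hH st' by blast
        let ?Pb = "net_places \<Delta> p' \<union> net_places \<Delta> p''"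
        have sub: "net_places \<Delta> s' \<union> net_places \<Delta> s'' \<subseteq> ?Pb" using subP[OF d1 d2] .
        have c2: "(dec s', dec s'') \<in> add_closure (Bb p' p'')"
          using cl_mono[OF c] bbis_mono[OF sub] unfolding Bb_def by blast
        have pp1: "parallel p'" using par_reach[OF r1 defs par] .
        have pp2: "parallel p''" using par_reach[OF r2 defs par] .
        have seqs: "\<forall>s \<in> ?Pb. sequential s" using places_seq[OF _ defs pp1] places_seq[OF _ defs pp2] by blast
        have idb: "branching_bisim tau (netH H \<Delta> ?Pb) (Id_on ?Pb)"
          using id_bisim[OF closed_Un[OF closed_net closed_net] seqs defs] .
        have "(M, M) \<in> add_closure (Bb p' p'')"
        proof (rule cl_refl, rule ballI)
          fix x assume "x \<in># M"
          then have "x \<in> ?Pb" using d1 net_places.init[of x p'] by auto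
          then show "(x,x) \<in> Bb p' p''" unfolding Bb_def using bbisI[OF idb] by blast
        qed
        from cl_plus[OF this c2] show "(dec p', dec p'') \<in> add_closure (Bb p' p'')" using d1 d2 by simp
      qed
      with nd show False by blast
    qed
  next
    assume "\<exists>pi. pi \<in># dec p \<and> \<not> DNI tau H \<Delta> pi"
    then obtain pi where pi: "pi \<in># dec p" and nd: "\<not> DNI tau H \<Delta> pi" by blast
    then obtain s' s'' h where rs: "reachable \<Delta> pi s'" and hH: "h \<in> H" and st: "step \<Delta> s' h s''"
      and nc: "(dec s', dec s'') \<notin> add_closure (Bb s' s'')" unfolding DNI_iff by blast
    obtain p' p'' M where r1: "reachable \<Delta> p p'" and st': "step \<Delta> p' h p''"
      and d1: "dec p' = M + dec s'" and d2: "dec p'' = M + dec s''"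
      using compose[OF pi rs st] by blast
    show "\<not> DNI tau H \<Delta> p"
    proof
      assume "DNI tau H \<Delta> p"
      then have "(dec p', dec p'') \<in> add_closure (Bb p' p'')"
        unfolding DNI_iff using r1 reach_step[OF r1 st'] hH st' by blast
      then have c0: "(M + dec s', M + dec s'') \<in> add_closure (Bb p' p'')" using d1 d2 by simp
      have symB: "\<And>a b. (a,b) \<in> Bb p' p'' \<Longrightarrow> (b,a) \<in> Bb p' p''" unfolding Bb_def by (rule bbis_sym)
      have trB: "\<And>a b c. (a,b) \<in> Bb p' p'' \<Longrightarrow> (b,c) \<in> Bb p' p'' \<Longrightarrow> (a,c) \<in> Bb p' p''"
        unfolding Bb_def by (rule bbis_trans)
      have c: "(dec s', dec s'') \<in> add_closure (Bb p' p'')" using cancel[OF symB trB c0] .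
      let ?Ps = "net_places \<Delta> s' \<union> net_places \<Delta> s''"
      have sub: "?Ps \<subseteq> net_places \<Delta> p' \<union> net_places \<Delta> p''" using subP[OF d1 d2] .
      have "set_mset (dec s') \<subseteq> ?Ps" "set_mset (dec s'') \<subseteq> ?Ps" using net_places.init by blast+
      then have c3: "(dec s', dec s'') \<in> add_closure (Bb p' p'' \<inter> ?Ps \<times> ?Ps)" using cl_restrict[OF c] by blast
      have "Bb p' p'' \<inter> ?Ps \<times> ?Ps \<subseteq> Bb s' s''"
        using bbis_restrict[OF closed_Un[OF closed_net closed_net] sub] unfolding Bb_def by blast
      then have "(dec s', dec s'') \<in> add_closure (Bb s' s'')" using cl_mono[OF c3] by blast
      with nc show False by blast
    qed
  qed
qed

end
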